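(* Let $d\ge2$, let $\mathcal{S}$ be a simple-minded system of $A_n^{dn}$-$\underline{\mathrm{mod}}$ with associated permutation $\sigma$, let $i\in\underline{n}$, and let $s_i$ be the size of the $\sigma$-orbit of $i$. For $0\le j\le s_i-1$ let $M_{ij}\in\mathcal{S}$ be the object with top $S_{\sigma^j(i)}$ and socle $S_{\sigma^{j+1}(i)}$, and write $M_{ij}=M^{\sigma^j(i)}_{\sigma^{j+1}(i),l_{ij}}$ with $l_{ij}\ge0$. Then there is at most one $j\in\{0,\dots,s_i-1\}$ with $l_{ij}=0$.
   Context: $A_n^{dn}=kQ/I$ ($k$ algebraically closed), $Q$ the cyclic quiver with vertices $1,\dots,n$ and arrows $i\to i+1$, $n\to1$, $I$ generated by all paths of length $dn+1$. $M^a_{b,t}$ is the indecomposable (uniserial) module with top $S_a$, socle $S_b$, and $S_a$ occurring $t+1$ times as composition factor. $\underline{\mathrm{Hom}}$ is Hom modulo maps factoring through projectives. A simple-minded system (sms) is a family $\mathcal{S}$ of indecomposable non-projective modules with $\underline{\mathrm{Hom}}(S,T)=0$ for distinct $S,T\in\mathcal{S}$, $\underline{\mathrm{Hom}}(S,S)\cong k$, and such that each indecomposable non-projective $X$ has $\underline{\mathrm{Hom}}(X,S)\neq0$ for some $S\in\mathcal{S}$. For an sms each simple is the top of exactly one and the socle of exactly one object; the associated permutation $\sigma$ of $\underline{n}=\{1,\dots,n\}$ is $\sigma(a)=b$ if some object has top $S_a$ and socle $S_b$. *)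

theory Defs
  imports "HOL-Computational_Algebra.Polynomial"
begin

text \<open>Concrete model of the self-injective Nakayama algebra A_n^{dn} = kQ/I,
  Q the cyclic quiver on vertices 1..n with arrows i -> i+1, n -> 1, I generated
  by all paths of length dn+1.

  A uniserial module is given by a pair (a, L): top S_a, Loewy length L,
  with basis e_0, ..., e_{L-1}, where e_m lies at vertex vtx n a m and the arrow
  starting at vtx n a m sends e_m to e_{m+1} (and e_{L-1} to 0).
  Valid modules: a in 1..n, 1 <= L <= dn+1; projective ones have L = dn+1.\<close>

definition vtx :: "nat \<Rightarrow> nat \<Rightarrow> nat \<Rightarrow> nat" where
  "vtx n a m = (a - 1 + m) mod n + 1"

text \<open>A module homomorphism (a,L) -> (b,K) written as a matrix F p m = coefficient
  of e'_p in f(e_m); conditions: entries outside the index ranges vanish, f respects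
  the vertex idempotents, and f commutes with the action of the arrows.\<close>

definition is_hom :: "nat \<Rightarrow> nat \<times> nat \<Rightarrow> nat \<times> nat \<Rightarrow> (nat \<Rightarrow> nat \<Rightarrow> 'k::field) \<Rightarrow> bool" where
  "is_hom n X Y F \<longleftrightarrow>
     (\<forall>p m. (snd Y \<le> p \<or> snd X \<le> m) \<longrightarrow> F p m = 0) \<and>
     (\<forall>p<snd Y. \<forall>m<snd X. vtx n (fst Y) p \<noteq> vtx n (fst X) m \<longrightarrow> F p m = 0) \<and>
     (\<forall>p<snd Y. \<forall>m<snd X.
        (if 0 < p then F (p - 1) m else 0) = (if m + 1 < snd X then F p (m + 1) else 0))"

definition proj_mod :: "nat \<Rightarrow> nat \<Rightarrow> nat \<Rightarrow> nat \<times> nat" where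
  "proj_mod n d c = (c, d * n + 1)"

text \<open>f : X -> Y factors through a projective module, i.e. through a finite direct
  sum of indecomposable projectives P_{c_1} + ... + P_{c_r}; equivalently f is a sum
  of composites X -> P_{c_k} -> Y.\<close>
definition factors_proj :: "nat \<Rightarrow> nat \<Rightarrow> nat \<times> nat \<Rightarrow> nat \<times> nat \<Rightarrow> (nat \<Rightarrow> nat \<Rightarrow> 'k::field) \<Rightarrow> bool" where
  "factors_proj n d X Y F \<longleftrightarrow>
     (\<exists>cs :: nat list. \<exists>G H :: nat \<Rightarrow> nat \<Rightarrow> nat \<Rightarrow> 'k.
        (\<forall>k<length cs. cs ! k \<in> {1..n} \<and>
            is_hom n X (proj_mod n d (cs ! k)) (G k) \<and>
            is_hom n (proj_mod n d (cs ! k)) Y (H k)) \<and>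
        F = (\<lambda>p m. \<Sum>k<length cs. \<Sum>q<d * n + 1. H k p q * G k q m))"

definition stable_hom_zero :: "'k::field itself \<Rightarrow> nat \<Rightarrow> nat \<Rightarrow> nat \<times> nat \<Rightarrow> nat \<times> nat \<Rightarrow> bool" where
  "stable_hom_zero _ n d X Y \<longleftrightarrow>
     (\<forall>F :: nat \<Rightarrow> nat \<Rightarrow> 'k. is_hom n X Y F \<longrightarrow> factors_proj n d X Y F)"

definition stable_end_is_k :: "'k::field itself \<Rightarrow> nat \<Rightarrow> nat \<Rightarrow> nat \<times> nat \<Rightarrow> bool" where
  "stable_end_is_k _ n d X \<longleftrightarrow>
     (\<exists>F :: nat \<Rightarrow> nat \<Rightarrow> 'k. is_hom n X X F \<and> \<not> factors_proj n d X X F \<and>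
        (\<forall>G. is_hom n X X G \<longrightarrow>
           (\<exists>c. factors_proj n d X X (\<lambda>p m. G p m - c * F p m))))"

text \<open>The module M^a_{b,t}: top S_a, socle S_b, S_a occurring t+1 times.
  It is encoded as a triple (a, b, t); its Loewy length is t*n + ((b - a) mod n) + 1.\<close>
definition mod_of :: "nat \<Rightarrow> nat \<times> nat \<times> nat \<Rightarrow> nat \<times> nat" where
  "mod_of n M = (case M of (a, b, t) \<Rightarrow> (a, t * n + (b + n - a) mod n + 1))"

definition indec_nonproj :: "nat \<Rightarrow> nat \<Rightarrow> nat \<times> nat \<times> nat \<Rightarrow> bool" where
  "indec_nonproj n d M \<longleftrightarrow>
     (case M of (a, b, t) \<Rightarrow> a \<in> {1..n} \<and> b \<in> {1..n} \<and> snd (mod_of n M) \<le> d * n)"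

definition is_sms :: "'k::field itself \<Rightarrow> nat \<Rightarrow> nat \<Rightarrow> (nat \<times> nat \<times> nat) set \<Rightarrow> bool" where
  "is_sms K n d S \<longleftrightarrow>
     (\<forall>M\<in>S. indec_nonproj n d M) \<and>
     (\<forall>M\<in>S. \<forall>N\<in>S. M \<noteq> N \<longrightarrow> stable_hom_zero K n d (mod_of n M) (mod_of n N)) \<and>
     (\<forall>M\<in>S. stable_end_is_k K n d (mod_of n M)) \<and>
     (\<forall>X. indec_nonproj n d X \<longrightarrow>
        (\<exists>M\<in>S. \<not> stable_hom_zero K n d (mod_of n X) (mod_of n M)))"

definition sms_perm :: "(nat \<times> nat \<times> nat) set \<Rightarrow> nat \<Rightarrow> nat" where
  "sms_perm S a = (THE b. \<exists>t. (a, b, t) \<in> S)"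

definition orbit_size :: "(nat \<Rightarrow> nat) \<Rightarrow> nat \<Rightarrow> nat" where
  "orbit_size f i = (LEAST s. 0 < s \<and> (f ^^ s) i = i)"

end

theory Submission
  imports Defs
begin

lemma hom_range: "is_hom n X Y F \<Longrightarrow> snd Y \<le> p \<or> snd X \<le> m \<Longrightarrow> F p m = 0"
  unfolding is_hom_def by blast
lemma hom_vtx: "is_hom n X Y F \<Longrightarrow> p < snd Y \<Longrightarrow> m < snd X \<Longrightarrow> vtx n (fst Y) p \<noteq> vtx n (fst X) m \<Longrightarrow> F p m = 0"
  unfolding is_hom_def by blast
lemma hom_rel: "is_hom n X Y F \<Longrightarrow> p < snd Y \<Longrightarrow> m < snd X \<Longrightarrow>
   (if 0 < p then F (p - 1) m else 0) = (if m + 1 < snd X then F p (m + 1) else 0)"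
  unfolding is_hom_def by blast

lemma toep:
  assumes h: "is_hom n X Y F"
  shows "F p m = (if m \<le> p \<and> m < snd X \<and> p < snd Y then F (p - m) 0 else 0)"
proof (induction m arbitrary: p)
  case 0
  then show ?case using hom_range[OF h, of p 0] by auto
next
  case (Suc m)
  show ?case
  proof (cases "Suc m < snd X \<and> p < snd Y")
    case False
    then show ?thesis using hom_range[OF h, of p "Suc m"] by auto
  next
    case True
    have rel: "(if 0 < p then F (p - 1) m else 0) = F p (Suc m)"
      using hom_rel[OF h, of p m] True by simp
    show ?thesis
    proof (cases "p = 0")
      case True
      then show ?thesis using rel by simp
    next
      case False
      have e1: "F p (Suc m) = F (p-1) m" using rel False by simp
      have e2: "F (p-1) m = (if m \<le> p - 1 then F (p - 1 - m) 0 else 0)"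
      proof -
        have "p - 1 < snd Y" "m < snd X" using True by auto
        then show ?thesis using Suc[of "p-1"] by simp
      qed
      have e3: "p - 1 - m = p - Suc m" by simp
      have e4: "(m \<le> p - 1) = (Suc m \<le> p)" using False by arith
      show ?thesis using e1 e2 e3 e4 True by simp
    qed
  qed
qed

lemma toep_low: "is_hom n X Y F \<Longrightarrow> p < m \<Longrightarrow> F p m = 0"
  using toep[of n X Y F p m] by auto

lemma toep_col0: assumes h: "is_hom n X Y F" and q: "q + snd X < snd Y" shows "F q 0 = 0"
proof (cases "snd X = 0")
  case True then show ?thesis using hom_range[OF h, of q 0] by auto
next
  case False
  have "F (q + snd X - 1) (snd X - 1) = F q 0"
    using toep[OF h, of "q + snd X - 1" "snd X - 1"] False q by auto
  moreover have "F (q + snd X - 1) (snd X - 1) = 0"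
    using hom_rel[OF h, of "q + snd X" "snd X - 1"] False q by simp
  ultimately show ?thesis by simp
qed

lemma fp_col0:
  assumes f: "factors_proj n d X Y F" and p: "p + snd X \<le> d * n"
  shows "F p 0 = 0"
proof -
  obtain cs G H where hk: "\<forall>k<length cs. cs ! k \<in> {1..n} \<and>
            is_hom n X (proj_mod n d (cs ! k)) (G k) \<and>
            is_hom n (proj_mod n d (cs ! k)) Y (H k)"
    and F: "F = (\<lambda>p m. \<Sum>k<length cs. \<Sum>q<d * n + 1. H k p q * G k q m)"
    using f unfolding factors_proj_def by (elim exE conjE) (rule that)
  have "H k p q * G k q 0 = 0" if k: "k < length cs" for k q
  proof (cases "p < q")
    case True
    have "is_hom n (proj_mod n d (cs ! k)) Y (H k)" using hk k by blast
    then show ?thesis using toep_low[of n _ Y "H k" p q] True by simp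
  next
    case False
    then have "q + snd X < snd (proj_mod n d (cs ! k))" using p by (simp add: proj_mod_def)
    moreover have "is_hom n X (proj_mod n d (cs ! k)) (G k)" using hk k by blast
    ultimately show ?thesis using toep_col0[of n X _ "G k" q] by simp
  qed
  note z = this
  have "(\<Sum>k<length cs. \<Sum>q<d*n+1. H k p q * G k q 0) = 0"
    by (intro sum.neutral ballI) (simp add: z)
  moreover have "F p 0 = (\<Sum>k<length cs. \<Sum>q<d*n+1. H k p q * G k q 0)"
    unfolding F by (rule refl)
  ultimately show ?thesis by simp
qed

lemma nonzero_hom:
  fixes K :: "'k::field itself"
  assumes r1: "1 \<le> r" and rL: "r \<le> L" and rK: "r \<le> M" and dn: "L + M \<le> d * n + r"
    and v: "vtx n b (M - r) = a"
  shows "\<not> stable_hom_zero K n d (a, L) (b, M)"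
proof -
  define F :: "nat \<Rightarrow> nat \<Rightarrow> 'k" where
    "F = (\<lambda>p m. if p < M \<and> m < L \<and> p = m + (M - r) then 1 else 0)"
  have vt: "vtx n b (m + (M - r)) = vtx n a m" for m
  proof -
    have a1: "(b - 1 + (M - r)) mod n = a - 1" using v unfolding vtx_def by simp
    have "(b - 1 + (m + (M - r))) mod n = ((b - 1 + (M - r)) + m) mod n" by (simp add: algebra_simps)
    also have "\<dots> = ((b - 1 + (M - r)) mod n + m) mod n" by (simp add: mod_add_left_eq)
    also have "\<dots> = (a - 1 + m) mod n" using a1 by simp
    finally show ?thesis unfolding vtx_def by simp
  qed
  have h: "is_hom n (a, L) (b, M) F"
    unfolding is_hom_def F_def
  proof (intro conjI allI impI)
    fix p m assume "p < snd (b, M)" "m < snd (a, L)" "vtx n (fst (b, M)) p \<noteq> vtx n (fst (a, L)) m"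
    then show "(if p < M \<and> m < L \<and> p = m + (M - r) then 1 else 0) = (0::'k)" using vt by auto
  next
    fix p m assume "p < snd (b, M)" "m < snd (a, L)"
    then show "(if 0 < p then if p - 1 < M \<and> m < L \<and> p - 1 = m + (M - r) then 1 else 0 else 0) =
       (if m + 1 < snd (a, L) then if p < M \<and> m + 1 < L \<and> p = m + 1 + (M - r) then 1 else (0::'k) else 0)"
      using r1 rL rK by auto
  qed auto
  have "F (M - r) 0 = 1" unfolding F_def using r1 rL rK by auto
  moreover have "\<not> factors_proj n d (a, L) (b, M) F"
  proof
    assume "factors_proj n d (a, L) (b, M) F"
    from fp_col0[OF this, of "M - r"] dn rK have "F (M - r) 0 = 0" by auto
    with \<open>F (M - r) 0 = 1\<close> show False by simp
  qed
  ultimately show ?thesis unfolding stable_hom_zero_def using h by auto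
qed

lemma vtx_shift: assumes "vtx n b k = vtx n c j" shows "vtx n b (k + m) = vtx n c (j + m)"
proof -
  have e: "(b - 1 + k) mod n = (c - 1 + j) mod n" using assms unfolding vtx_def by simp
  have "(b - 1 + (k + m)) mod n = ((b - 1 + k) mod n + m) mod n" by (simp add: mod_add_left_eq add.assoc)
  also have "\<dots> = ((c - 1 + j) mod n + m) mod n" using e by simp
  also have "\<dots> = (c - 1 + (j + m)) mod n" by (simp add: mod_add_left_eq add.assoc)
  finally show ?thesis unfolding vtx_def by simp
qed

lemma vanish:
  assumes h: "is_hom n (c, L) (b, M) F" and b: "b \<in> {1..n}" and Md: "M \<le> d*n"
   and z: "\<And>p. p + L \<le> d*n \<Longrightarrow> F p 0 = 0"
  shows "factors_proj n d (c, L) (b, M) F"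
proof -
  define G :: "nat \<Rightarrow> nat \<Rightarrow> nat \<Rightarrow> 'a" where
    "G = (\<lambda>k p m. if p < d*n+1 \<and> m < L \<and> m \<le> p then F (p - m) 0 else 0)"
  define H :: "nat \<Rightarrow> nat \<Rightarrow> nat \<Rightarrow> 'a" where
    "H = (\<lambda>k p q. if p < M \<and> p = q then 1 else 0)"
  have hG: "is_hom n (c, L) (proj_mod n d b) (G 0)"
    unfolding is_hom_def proj_mod_def
  proof (intro conjI allI impI)
    fix p m assume "snd (b, d * n + 1) \<le> p \<or> snd (c, L) \<le> m"
    then show "G 0 p m = 0" unfolding G_def by auto
  next
    fix p m assume p: "p < snd (b, d * n + 1)" and m: "m < snd (c, L)"
      and nv: "vtx n (fst (b, d * n + 1)) p \<noteq> vtx n (fst (c, L)) m"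
    show "G 0 p m = 0"
    proof (rule ccontr)
      assume ne: "G 0 p m \<noteq> 0"
      then have mp: "m \<le> p" and Fne: "F (p - m) 0 \<noteq> 0" unfolding G_def by (auto split: if_splits)
      have "\<not> (snd (b, M) \<le> p - m \<or> snd (c, L) \<le> 0)" using Fne hom_range[OF h, of "p - m" 0] by blast
      then have "p - m < M" "0 < L" by auto
      then have "vtx n b (p - m) = vtx n c 0" using Fne hom_vtx[OF h, of "p - m" 0] by auto
      then have "vtx n b (p - m + m) = vtx n c (0 + m)" by (rule vtx_shift)
      then show False using nv mp by simp
    qed
  next
    fix p m assume p: "p < snd (b, d * n + 1)" and m: "m < snd (c, L)"
    show "(if 0 < p then G 0 (p - 1) m else 0) = (if m + 1 < snd (c, L) then G 0 p (m + 1) else 0)"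
    proof (cases "p = 0")
      case True then show ?thesis unfolding G_def by simp
    next
      case False
      show ?thesis
      proof (cases "m + 1 < L")
        case True
        have e3: "p - 1 - m = p - (m + 1)" by simp
        have e4: "(m \<le> p - 1) = (m + 1 \<le> p)" using False by arith
        have "G 0 (p - 1) m = G 0 p (m + 1)" proof -
          have "p - 1 < d * n + 1" using p by simp
          then show ?thesis unfolding G_def using e3 e4 p True by simp
        qed
        then show ?thesis using False True by simp
      next
        case ml: False
        then have "m = L - 1" using m by simp
        have "G 0 (p - 1) m = 0"
        proof (cases "m \<le> p - 1")
          case True
          have "p < d*n+1" "m < L" using p m by auto
          then have "p - 1 - m + L \<le> d * n" using ml True False by arith
          then show ?thesis using z unfolding G_def by simp
        qed (simp add: G_def)
        then show ?thesis using ml by simp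
      qed
    qed
  qed
  have hH: "is_hom n (proj_mod n d b) (b, M) (H 0)"
    unfolding is_hom_def proj_mod_def
  proof (intro conjI allI impI)
    fix p m assume "snd (b, M) \<le> p \<or> snd (b, d * n + 1) \<le> m"
    then show "H 0 p m = 0" unfolding H_def using Md by auto
  next
    fix p m assume "p < snd (b, M)" "m < snd (b, d * n + 1)" "vtx n (fst (b, M)) p \<noteq> vtx n (fst (b, d * n + 1)) m"
    then show "H 0 p m = 0" unfolding H_def by auto
  next
    fix p m assume p: "p < snd (b, M)" and m: "m < snd (b, d * n + 1)"
    show "(if 0 < p then H 0 (p - 1) m else 0) = (if m + 1 < snd (b, d * n + 1) then H 0 p (m + 1) else 0)"
      using p m Md unfolding H_def by auto
  qed
  have comp: "F p m = (\<Sum>k<length [b]. \<Sum>q<d * n + 1. H k p q * G k q m)" for p m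
  proof -
    have "(\<Sum>q<d * n + 1. H 0 p q * G 0 q m) = (\<Sum>q<d * n + 1. if q = p then (if p < M then G 0 p m else 0) else 0)"
      by (rule sum.cong) (auto simp: H_def)
    also have "\<dots> = (if p < M then G 0 p m else 0)"
      using Md by (subst sum.delta) auto
    also have "\<dots> = F p m"
      using toep[OF h, of p m] Md unfolding G_def by auto
    finally show ?thesis by simp
  qed
  show ?thesis unfolding factors_proj_def
    apply (rule exI[of _ "[b]"], rule exI[of _ G], rule exI[of _ H])
    using b hG hH comp by auto
qed

lemma modn_int: "a \<le> n \<Longrightarrow> int ((b + n - a) mod n) = (int b - int a) mod int n"
proof -
  assume "a \<le> n"
  then have "int (b + n - a) = (int b - int a) + int n" by simp
  then show ?thesis by (simp add: zmod_int)
qed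

lemma vtx_intI:
  assumes "1 \<le> a" "a \<le> n" "1 \<le> b" "int n dvd (int b + int k - int a)"
  shows "vtx n b k = a"
proof -
  have "int ((b - 1 + k) mod n) = (int b - 1 + int k) mod int n"
    using assms(3) by (simp add: zmod_int of_nat_diff algebra_simps)
  also have "\<dots> = (int a - 1) mod int n"
    using assms(4) by (metis (no_types, lifting) add.commute add_diff_eq diff_diff_eq2 mod_eq_dvd_iff)
  also have "\<dots> = int a - 1" using assms(1,2) by simp
  finally have "(b - 1 + k) mod n = a - 1" using assms(1) by linarith
  then show ?thesis unfolding vtx_def using assms(1) by simp
qed

lemma int_mod_uniq: "0 \<le> (A::int) \<Longrightarrow> A < N \<Longrightarrow> 0 \<le> B \<Longrightarrow> B < N \<Longrightarrow> int N' = N \<Longrightarrow> N dvd (A - B) \<Longrightarrow> A = B"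
  by (metis mod_eq_dvd_iff mod_pos_pos_trivial)

lemma sms_mem: "is_sms K n d S \<Longrightarrow> (a,b,t) \<in> S \<Longrightarrow>
   1 \<le> a \<and> a \<le> n \<and> 1 \<le> b \<and> b \<le> n \<and> t*n + (b+n-a) mod n + 1 \<le> d*n"
  unfolding is_sms_def indec_nonproj_def mod_of_def by auto

lemma sms_eq: "is_sms K n d S \<Longrightarrow> M \<in> S \<Longrightarrow> N \<in> S \<Longrightarrow>
   \<not> stable_hom_zero K n d (mod_of n M) (mod_of n N) \<Longrightarrow> M = N"
  unfolding is_sms_def by blast

lemma mod_of_eq: "mod_of n (a,b,t) = (a, t*n + (b+n-a) mod n + 1)"
  unfolding mod_of_def by simp

lemma vtx0: "1 \<le> a \<Longrightarrow> a \<le> n \<Longrightarrow> vtx n a 0 = a"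
  unfolding vtx_def by simp

lemma top_unique:
  assumes S: "is_sms K n d S" and m1: "(a,b,t) \<in> S" and m2: "(a,b',t') \<in> S"
  shows "b = b' \<and> t = t'"
proof -
  define L where "L = t*n + (b+n-a) mod n + 1"
  define L' where "L' = t'*n + (b'+n-a) mod n + 1"
  have f1: "1 \<le> a" "a \<le> n" "L \<le> d*n" using sms_mem[OF S m1] unfolding L_def by auto
  have f2: "L' \<le> d*n" using sms_mem[OF S m2] unfolding L'_def by auto
  have "(a,b,t) = (a,b',t')"
  proof (cases "L \<le> L'")
    case True
    have "\<not> stable_hom_zero K n d (a, L') (a, L)"
      by (rule nonzero_hom[of L L' L]) (use True f1 f2 vtx0 in \<open>auto simp: L_def\<close>)
    then show ?thesis using sms_eq[OF S m2 m1] unfolding mod_of_eq L_def L'_def by auto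
  next
    case False
    have "\<not> stable_hom_zero K n d (a, L) (a, L')"
      by (rule nonzero_hom[of L' L L']) (use False f1 f2 vtx0 in \<open>auto simp: L'_def\<close>)
    then show ?thesis using sms_eq[OF S m1 m2] unfolding mod_of_eq L_def L'_def by auto
  qed
  then show ?thesis by simp
qed

lemma socle_unique:
  assumes S: "is_sms K n d S" and m1: "(a,b,t) \<in> S" and m2: "(a',b,t') \<in> S"
  shows "a = a'"
proof -
  define L where "L = t*n + (b+n-a) mod n + 1"
  define L' where "L' = t'*n + (b+n-a') mod n + 1"
  have f1: "1 \<le> a" "a \<le> n" "L \<le> d*n" "1 \<le> b" using sms_mem[OF S m1] unfolding L_def by auto
  have f2: "1 \<le> a'" "a' \<le> n" "L' \<le> d*n" using sms_mem[OF S m2] unfolding L'_def by auto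
  have iL: "int L = int t * int n + (int b - int a) mod int n + 1"
    unfolding L_def using modn_int[OF f1(2), of b] by simp
  have iL': "int L' = int t' * int n + (int b - int a') mod int n + 1"
    unfolding L'_def using modn_int[OF f2(2), of b] by simp
  have dv: "int n dvd (int a' + (int L' - int L) - int a)"
  proof -
    have "int n dvd ((int b - int a) - (int b - int a) mod int n)" by (rule dvd_minus_mod)
    moreover have "int n dvd ((int b - int a') - (int b - int a') mod int n)" by (rule dvd_minus_mod)
    moreover have "int n dvd (int n * (int t' - int t))" by simp
    ultimately have D: "int n dvd (int n * (int t' - int t) + ((int b - int a) - (int b - int a) mod int n) - ((int b - int a') - (int b - int a') mod int n))"
      by (meson dvd_add dvd_diff)
    have E: "int a' + (int L' - int L) - int a = int n * (int t' - int t) + ((int b - int a) - (int b - int a) mod int n) - ((int b - int a') - (int b - int a') mod int n)"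
      unfolding iL iL' by (simp add: algebra_simps)
    show ?thesis unfolding E by (rule D)
  qed
  have dv': "int n dvd (int a + (int L - int L') - int a')"
  proof -
    have "int a + (int L - int L') - int a' = - (int a' + (int L' - int L) - int a)" by simp
    then show ?thesis using dv by (metis dvd_minus_iff)
  qed
  have "(a,b,t) = (a',b,t')"
  proof (cases "L \<le> L'")
    case True
    have v: "vtx n a' (L' - L) = a"
      by (rule vtx_intI) (use f1 f2 True dv in \<open>auto simp: of_nat_diff\<close>)
    have "\<not> stable_hom_zero K n d (a, L) (a', L')"
      by (rule nonzero_hom[of L L L']) (use True f1 f2 v in \<open>auto simp: L_def\<close>)
    then show ?thesis using sms_eq[OF S m1 m2] unfolding mod_of_eq L_def L'_def by auto
  next
    case False
    have v: "vtx n a (L - L') = a'"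
      by (rule vtx_intI) (use f1 f2 False dv' in \<open>auto simp: of_nat_diff\<close>)
    have "\<not> stable_hom_zero K n d (a', L') (a, L)"
      by (rule nonzero_hom[of L' L' L]) (use False f1 f2 v in \<open>auto simp: L'_def\<close>)
    then show ?thesis using sms_eq[OF S m2 m1] unfolding mod_of_eq L_def L'_def by auto
  qed
  then show ?thesis by simp
qed

lemma top_exists:
  fixes K :: "'k::field itself"
  assumes S: "is_sms K n d S" and n: "1 \<le> n" and d: "1 \<le> d" and c: "1 \<le> c" "c \<le> n"
  shows "\<exists>b t. (c,b,t) \<in> S"
proof -
  define b0 where "b0 = (if c = 1 then n else c - 1)"
  have b0: "1 \<le> b0" "b0 \<le> n" using c n unfolding b0_def by auto
  have bm: "(b0 + n - c) mod n = n - 1"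
  proof (cases "c = 1")
    case True
    then have "b0 + n - c = (n - 1) + n" using n unfolding b0_def by simp
    moreover have "((n - 1) + n) mod n = (n - 1) mod n" by (rule mod_add_self2)
    moreover have "(n - 1) mod n = n - 1" using n by simp
    ultimately show ?thesis by simp
  next
    case False
    then have "b0 + n - c = n - 1" using c unfolding b0_def by simp
    then show ?thesis using n by simp
  qed
  have len: "(d - 1) * n + (b0 + n - c) mod n + 1 = d * n"
  proof -
    have "(d - 1) * n + n = d * n" using d by (metis Suc_diff_1 less_le_trans mult_Suc zero_less_one add.commute)
    then show ?thesis using bm n by simp
  qed
  have X: "indec_nonproj n d (c, b0, d - 1)"
    unfolding indec_nonproj_def mod_of_eq using c b0 len by simp
  then obtain M where M: "M \<in> S" and nz: "\<not> stable_hom_zero K n d (mod_of n (c, b0, d - 1)) (mod_of n M)"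
    using S unfolding is_sms_def by blast
  obtain a b t where Mabt: "M = (a,b,t)" by (cases M) auto
  have fa: "1 \<le> a" "a \<le> n" using sms_mem[OF S M[unfolded Mabt]] by auto
  have "a = c"
  proof (rule ccontr)
    assume ac: "a \<noteq> c"
    define LM where "LM = t*n + (b+n-a) mod n + 1"
    have LM: "LM \<le> d * n" using sms_mem[OF S M[unfolded Mabt]] unfolding LM_def by simp
    have "stable_hom_zero K n d (c, d*n) (a, LM)"
      unfolding stable_hom_zero_def
    proof (intro allI impI)
      fix F :: "nat \<Rightarrow> nat \<Rightarrow> 'k"
      assume h: "is_hom n (c, d * n) (a, LM) F"
      show "factors_proj n d (c, d * n) (a, LM) F"
      proof (rule vanish[OF h])
        show "a \<in> {1..n}" using fa by simp
        show "LM \<le> d * n" by (rule LM)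
        fix p assume "p + d * n \<le> d * n"
        then have p0: "p = 0" by simp
        have "0 < d * n" using n d by simp
        moreover have "0 < LM" unfolding LM_def by simp
        moreover have "vtx n a 0 \<noteq> vtx n c 0" using vtx0[OF fa] vtx0[OF c] ac by simp
        ultimately show "F p 0 = 0" using hom_vtx[OF h, of 0 0] p0 by simp
      qed
    qed
    then show False using nz unfolding Mabt mod_of_eq len LM_def by simp
  qed
  then show ?thesis using M Mabt by blast
qed

lemma sigma_eq: assumes S: "is_sms K n d S" and m: "(a,b,t) \<in> S" shows "sms_perm S a = b"
  unfolding sms_perm_def
proof (rule the_equality)
  show "\<exists>t. (a, b, t) \<in> S" using m by blast
  fix b' assume "\<exists>t. (a, b', t) \<in> S"
  then obtain t' where "(a,b',t') \<in> S" by blast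
  then show "b' = b" using top_unique[OF S m] by blast
qed

lemma sigma_in:
  fixes K :: "'k::field itself"
  assumes S: "is_sms K n d S" and n: "1 \<le> n" and d: "1 \<le> d" and c: "1 \<le> c" "c \<le> n"
  shows "\<exists>t. (c, sms_perm S c, t) \<in> S" "1 \<le> sms_perm S c" "sms_perm S c \<le> n"
proof -
  obtain b t where m: "(c,b,t) \<in> S" using top_exists[OF S n d c] by blast
  have "sms_perm S c = b" using sigma_eq[OF S m] .
  then show "\<exists>t. (c, sms_perm S c, t) \<in> S" "1 \<le> sms_perm S c" "sms_perm S c \<le> n"
    using m sms_mem[OF S m] by auto
qed

lemma lt_d: assumes "t*n + z + 1 \<le> (d::nat)*n" shows "t*n + n \<le> d*n"
proof -
  have "t*n < d*n" using assms by linarith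
  then have "t < d" by (simp add: mult_less_cancel2)
  then have "Suc t * n \<le> d * n" by (intro mult_le_mono1) simp
  then show ?thesis by simp
qed

lemma gap:
  assumes S: "is_sms K n d S" and m1: "(c,e,t) \<in> S" and m2: "(x,y,u) \<in> S"
    and gx: "(e+n-c) mod n < (x+n-c) mod n"
  shows "(e+n-c) mod n < (y+n-c) mod n"
proof (rule ccontr)
  assume "\<not> ?thesis"
  then have yd: "(y+n-c) mod n \<le> (e+n-c) mod n" by simp
  define \<delta> where "\<delta> = (e+n-c) mod n"
  define x' where "x' = (x+n-c) mod n"
  define y' where "y' = (y+n-c) mod n"
  define \<epsilon> where "\<epsilon> = (y+n-x) mod n"
  define L where "L = t*n + \<delta> + 1"
  define M where "M = u*n + \<epsilon> + 1"
  have f1: "1 \<le> c" "c \<le> n" "L \<le> d*n" using sms_mem[OF S m1] unfolding L_def \<delta>_def by auto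
  have f2: "1 \<le> x" "x \<le> n" "1 \<le> y" "y \<le> n" "M \<le> d*n" using sms_mem[OF S m2] unfolding M_def \<epsilon>_def by auto
  have n0: "0 < n" using f1 by simp
  have xn: "x' < n" unfolding x'_def using n0 by simp
  have dx: "\<delta> < x'" "y' \<le> \<delta>" using gx yd unfolding \<delta>_def x'_def y'_def by auto
  have ix: "int x' = (int x - int c) mod int n" unfolding x'_def using modn_int[OF f1(2)] by simp
  have iy: "int y' = (int y - int c) mod int n" unfolding y'_def using modn_int[OF f1(2)] by simp
  have ie: "int \<epsilon> = (int y - int x) mod int n" unfolding \<epsilon>_def using modn_int[OF f2(2)] by simp
  have eps: "\<epsilon> = n + y' - x'"
  proof -
    have "int \<epsilon> = int n + int y' - int x'"
    proof (rule int_mod_uniq[of _ "int n" _ n])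
      show "0 \<le> int \<epsilon>" by simp
      show "int \<epsilon> < int n" unfolding \<epsilon>_def using n0 by simp
      show "0 \<le> int n + int y' - int x'" using xn by simp
      show "int n + int y' - int x' < int n" using dx by simp
      show "int n = int n" by simp
      have A: "int n dvd ((int y - int x) - (int y - int x) mod int n)" by (rule dvd_minus_mod)
      have B: "int n dvd ((int y - int c) - (int y - int c) mod int n)" by (rule dvd_minus_mod)
      have C: "int n dvd ((int x - int c) - (int x - int c) mod int n)" by (rule dvd_minus_mod)
      have D: "int n dvd (((int y - int c) - (int y - int c) mod int n) - ((int x - int c) - (int x - int c) mod int n) - ((int y - int x) - (int y - int x) mod int n) - int n)"
        using A B C by (meson dvd_diff dvd_refl)
      have E: "int \<epsilon> - (int n + int y' - int x') = ((int y - int c) - (int y - int c) mod int n) - ((int x - int c) - (int x - int c) mod int n) - ((int y - int x) - (int y - int x) mod int n) - int n"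
        unfolding ie iy ix by (simp add: algebra_simps)
      show "int n dvd (int \<epsilon> - (int n + int y' - int x'))" unfolding E by (rule D)
    qed
    then show ?thesis by simp
  qed
  define k where "k = min t u"
  define r where "r = k*n + y' + 1"
  have kt: "k*n \<le> t*n" "k*n \<le> u*n" unfolding k_def by (simp_all add: mult_le_mono1)
  have td: "t*n + n \<le> d*n" using lt_d[of t n \<delta> d] f1 unfolding L_def by simp
  have ud: "u*n + n \<le> d*n" using lt_d[of u n \<epsilon> d] f2 unfolding M_def by simp
  have kk: "k = t \<or> k = u" unfolding k_def by auto
  have r1: "1 \<le> r" unfolding r_def by simp
  have rL: "r \<le> L" unfolding r_def L_def using kt dx by linarith
  have rM: "r \<le> M" unfolding r_def M_def eps using kt dx xn by linarith
  have LM: "L + M \<le> d*n + r"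
  proof (cases "k = t")
    case True
    then have "k*n = t*n" by simp
    then show ?thesis unfolding r_def L_def M_def eps using td ud dx xn by linarith
  next
    case False
    then have "k*n = u*n" using kk by auto
    then show ?thesis unfolding r_def L_def M_def eps using td ud dx xn by linarith
  qed
  have v: "vtx n x (M - r) = c"
  proof (rule vtx_intI)
    show "1 \<le> c" "c \<le> n" "1 \<le> x" using f1 f2 by auto
    have Mr: "int (M - r) = int u * int n - int k * int n + int n - int x'"
      using rM unfolding M_def r_def eps using dx xn by (simp add: of_nat_diff)
    have C: "int n dvd ((int x - int c) - (int x - int c) mod int n)" by (rule dvd_minus_mod)
    have D: "int n dvd (((int x - int c) - (int x - int c) mod int n) + int n * (int u - int k + 1))"
      using C by (meson dvd_add dvd_triv_left)
    have E: "int x + int (M - r) - int c = ((int x - int c) - (int x - int c) mod int n) + int n * (int u - int k + 1)"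
      unfolding Mr ix by (simp add: algebra_simps)
    show "int n dvd (int x + int (M - r) - int c)" unfolding E by (rule D)
  qed
  have "\<not> stable_hom_zero K n d (c, L) (x, M)"
    by (rule nonzero_hom[OF r1 rL rM LM v])
  then have "(c,e,t) = (x,y,u)" using sms_eq[OF S m1 m2] unfolding mod_of_eq L_def M_def \<delta>_def \<epsilon>_def by simp
  then have "x' = 0" unfolding x'_def by simp
  then show False using dx by simp
qed

lemma funpow_in:
  assumes "\<And>c. c \<in> A \<Longrightarrow> f c \<in> A" "c \<in> A" shows "(f ^^ m) c \<in> A"
  using assms by (induction m) auto

lemma funpow_cancel:
  assumes inj: "inj_on f A" and cl: "\<And>c. c \<in> A \<Longrightarrow> f c \<in> A" and i: "i \<in> A"
  shows "a \<le> b \<Longrightarrow> (f ^^ a) i = (f ^^ b) i \<Longrightarrow> (f ^^ (b - a)) i = i"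
proof (induction a arbitrary: b)
  case 0 then show ?case by simp
next
  case (Suc a)
  then obtain b' where b: "b = Suc b'" by (cases b) auto
  have "f ((f ^^ a) i) = f ((f ^^ b') i)" using Suc.prems b by simp
  moreover have "(f ^^ a) i \<in> A" "(f ^^ b') i \<in> A" using funpow_in[of A f, OF cl i] by auto
  ultimately have "(f ^^ a) i = (f ^^ b') i" using inj unfolding inj_on_def by blast
  then have "(f ^^ (b' - a)) i = i" using Suc.IH[of b'] Suc.prems b by simp
  then show ?case using b by simp
qed

lemma period_exists:
  assumes inj: "inj_on f {1..n::nat}" and cl: "\<And>c. c \<in> {1..n} \<Longrightarrow> f c \<in> {1..n}" and i: "i \<in> {1..n}"
  shows "\<exists>s>0. (f ^^ s) i = i"
proof -
  define g where "g = (\<lambda>m. (f ^^ m) i)"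
  have "g ` {0..n} \<subseteq> {1..n}" unfolding g_def using funpow_in[of "{1..n}" f, OF cl i] by auto
  then have "card (g ` {0..n}) \<le> n" using card_mono[of "{1..n}"] by fastforce
  then have "\<not> inj_on g {0..n}" by (intro pigeonhole) simp
  then obtain a b where ab: "a \<in> {0..n}" "b \<in> {0..n}" "a \<noteq> b" "g a = g b" unfolding inj_on_def by blast
  show ?thesis
  proof (cases "a < b")
    case True
    then have "(f ^^ (b - a)) i = i" using funpow_cancel[OF inj cl i, of a b] ab unfolding g_def by simp
    then show ?thesis using True by (intro exI[of _ "b - a"]) simp
  next
    case False
    then have "b < a" using ab by simp
    then have "(f ^^ (a - b)) i = i" using funpow_cancel[OF inj cl i, of b a] ab unfolding g_def by simp
    then show ?thesis using \<open>b < a\<close> by (intro exI[of _ "a - b"]) simp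
  qed
qed

lemma funpow_period: "(f ^^ s) c = c \<Longrightarrow> (f ^^ (s * q)) c = c"
proof (induction q)
  case 0 then show ?case by simp
next
  case (Suc q)
  have "(f ^^ (s * Suc q)) c = (f ^^ s) ((f ^^ (s * q)) c)"
    by (simp add: funpow_add add.commute)
  then show ?case using Suc by simp
qed

theorem lemma4p6:
  fixes K :: "'k::alg_closed_field itself"
    and n d i :: nat and S :: "(nat \<times> nat \<times> nat) set"
  assumes "1 \<le> n" and "2 \<le> d"
    and "is_sms K n d S"
    and "i \<in> {1..n}"
  shows "\<forall>j1 j2. j1 < orbit_size (sms_perm S) i \<and> j2 < orbit_size (sms_perm S) i \<and>
           ((sms_perm S ^^ j1) i, (sms_perm S ^^ Suc j1) i, 0) \<in> S \<and>
           ((sms_perm S ^^ j2) i, (sms_perm S ^^ Suc j2) i, 0) \<in> S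
           \<longrightarrow> j1 = j2"
proof -
  note n = assms(1) and d2 = assms(2) and S = assms(3) and i = assms(4)
  define \<sigma> where "\<sigma> = sms_perm S"
  have d1: "1 \<le> d" using d2 by simp
  have cl: "\<sigma> c \<in> {1..n}" if "c \<in> {1..n}" for c
    using sigma_in[OF S n d1, of c] that unfolding \<sigma>_def by auto
  have obj: "\<exists>t. (c, \<sigma> c, t) \<in> S" if "c \<in> {1..n}" for c
    using sigma_in[OF S n d1, of c] that unfolding \<sigma>_def by auto
  have inj: "inj_on \<sigma> {1..n}"
  proof (rule inj_onI)
    fix a a' assume a: "a \<in> {1..n}" "a' \<in> {1..n}" "\<sigma> a = \<sigma> a'"
    obtain t where o1: "(a, \<sigma> a, t) \<in> S" using obj a by blast
    obtain t' where o2: "(a', \<sigma> a', t') \<in> S" using obj a by blast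
    then have o2': "(a', \<sigma> a, t') \<in> S" using a(3) by simp
    show "a = a'" by (rule socle_unique[OF S o1 o2'])
  qed
  have pin: "(\<sigma> ^^ m) c \<in> {1..n}" if "c \<in> {1..n}" for m c
    using funpow_in[of "{1..n}" \<sigma>, OF cl that] by blast
  define s where "s = orbit_size \<sigma> i"
  have ex: "\<exists>s>0. (\<sigma> ^^ s) i = i" by (rule period_exists[OF inj cl i])
  have sP: "0 < s \<and> (\<sigma> ^^ s) i = i"
    unfolding s_def orbit_size_def using LeastI_ex[of "\<lambda>s. 0 < s \<and> (\<sigma> ^^ s) i = i"] ex by blast
  have smin: "s \<le> s'" if "0 < s'" "(\<sigma> ^^ s') i = i" for s'
    unfolding s_def orbit_size_def by (rule Least_le) (use that in blast)
  have comm: "(\<sigma> ^^ a) ((\<sigma> ^^ b) c) = (\<sigma> ^^ (a + b)) c" for a b c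
    by (simp add: funpow_add)
  have cyc: "(\<sigma> ^^ (s * q)) ((\<sigma> ^^ j) i) = (\<sigma> ^^ j) i" for q j
  proof (rule funpow_period)
    have "(\<sigma> ^^ s) ((\<sigma> ^^ j) i) = (\<sigma> ^^ (j + s)) i" using comm[of s j i] by (simp add: add.commute)
    also have "\<dots> = (\<sigma> ^^ j) ((\<sigma> ^^ s) i)" using comm[of j s i] by simp
    also have "\<dots> = (\<sigma> ^^ j) i" using sP by simp
    finally show "(\<sigma> ^^ s) ((\<sigma> ^^ j) i) = (\<sigma> ^^ j) i" .
  qed
  have arc: "((\<sigma> ^^ m) c + n - c) mod n \<le> (\<sigma> c + n - c) mod n" if c: "c = (\<sigma> ^^ j) i" for j m c
  proof (rule ccontr)
    assume "\<not> ?thesis"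
    then have g0: "(\<sigma> c + n - c) mod n < ((\<sigma> ^^ m) c + n - c) mod n" by simp
    have cin: "c \<in> {1..n}" using c pin i by simp
    obtain tc where oc: "(c, \<sigma> c, tc) \<in> S" using obj cin by blast
    have gk: "(\<sigma> c + n - c) mod n < ((\<sigma> ^^ (m + k)) c + n - c) mod n" for k
    proof (induction k)
      case 0 then show ?case using g0 by simp
    next
      case (Suc k)
      define x where "x = (\<sigma> ^^ (m + k)) c"
      have xin: "x \<in> {1..n}" unfolding x_def using pin cin by simp
      obtain tx where ox: "(x, \<sigma> x, tx) \<in> S" using obj xin by blast
      have "(\<sigma> c + n - c) mod n < (\<sigma> x + n - c) mod n"
        by (rule gap[OF S oc ox]) (use Suc x_def in simp)
      then show ?case unfolding x_def by simp
    qed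
    have "(\<sigma> ^^ (m + (s * (m + 1) - m))) c = c"
    proof -
      have "1 * (m + 1) \<le> s * (m + 1)" using sP by (intro mult_le_mono1) simp
      then have "s * (m + 1) \<ge> m" by simp
      then have "m + (s * (m + 1) - m) = s * (m + 1)" by simp
      then show ?thesis using cyc[of "m + 1" j] c by simp
    qed
    then show False using gk[of "s * (m + 1) - m"] by simp
  qed
  have dist: "(\<sigma> ^^ j1) i \<noteq> (\<sigma> ^^ j2) i" if j: "j1 < j2" "j2 < s" for j1 j2
  proof
    assume eq: "(\<sigma> ^^ j1) i = (\<sigma> ^^ j2) i"
    have "(\<sigma> ^^ (s - j2 + j1)) i = (\<sigma> ^^ (s - j2)) ((\<sigma> ^^ j1) i)" using comm by simp
    also have "\<dots> = (\<sigma> ^^ (s - j2)) ((\<sigma> ^^ j2) i)" using eq by simp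
    also have "\<dots> = (\<sigma> ^^ s) i" using comm[of "s - j2" j2 i] j by simp
    also have "\<dots> = i" using sP by simp
    finally have "s \<le> s - j2 + j1" using smin j by simp
    then show False using j by simp
  qed
  have key: False if j: "j1 < j2" "j2 < s"
    and m1: "((\<sigma> ^^ j1) i, (\<sigma> ^^ Suc j1) i, 0) \<in> S"
    and m2: "((\<sigma> ^^ j2) i, (\<sigma> ^^ Suc j2) i, 0) \<in> S" for j1 j2
  proof -
    define a1 where "a1 = (\<sigma> ^^ j1) i"
    define a2 where "a2 = (\<sigma> ^^ j2) i"
    define b1 where "b1 = (\<sigma> ^^ Suc j1) i"
    define b2 where "b2 = (\<sigma> ^^ Suc j2) i"
    have inn: "a1 \<in> {1..n}" "a2 \<in> {1..n}" "b1 \<in> {1..n}" "b2 \<in> {1..n}"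
      unfolding a1_def a2_def b1_def b2_def by (rule pin[OF i])+
    have sb1: "\<sigma> a1 = b1" "\<sigma> a2 = b2" unfolding a1_def a2_def b1_def b2_def by simp_all
    define \<delta>1 where "\<delta>1 = (b1 + n - a1) mod n"
    define \<delta>2 where "\<delta>2 = (b2 + n - a2) mod n"
    define p where "p = (a1 + n - a2) mod n"
    define q where "q = (b2 + n - a1) mod n"
    have qd: "q \<le> \<delta>1"
    proof -
      have "(\<sigma> ^^ (Suc j2 - j1)) a1 = b2" unfolding a1_def b2_def using comm[of "Suc j2 - j1" j1 i] j by simp
      then show ?thesis using arc[OF a1_def, of "Suc j2 - j1"] sb1 unfolding q_def \<delta>1_def by simp
    qed
    have pd: "p \<le> \<delta>2"
    proof -
      have "(\<sigma> ^^ (s - j2 + j1)) a2 = (\<sigma> ^^ (s - j2 + j1 + j2)) i" unfolding a2_def using comm by simp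
      also have "s - j2 + j1 + j2 = j1 + s" using j by simp
      also have "(\<sigma> ^^ (j1 + s)) i = (\<sigma> ^^ j1) ((\<sigma> ^^ s) i)" using comm by simp
      also have "\<dots> = a1" unfolding a1_def using sP by simp
      finally have "(\<sigma> ^^ (s - j2 + j1)) a2 = a1" .
      then show ?thesis using arc[OF a2_def, of "s - j2 + j1"] sb1 unfolding p_def \<delta>2_def by simp
    qed
    have n0: "0 < n" using n by simp
    have lt: "\<delta>1 < n" "\<delta>2 < n" "p < n" "q < n" unfolding \<delta>1_def \<delta>2_def p_def q_def using n0 by simp_all
    have fin: "a1 \<le> n" "a2 \<le> n" "1 \<le> a1" "1 \<le> a2" using inn by auto
    have ip: "int p = (int a1 - int a2) mod int n" unfolding p_def using modn_int[OF fin(2)] by simp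
    have iq: "int q = (int b2 - int a1) mod int n" unfolding q_def using modn_int[OF fin(1)] by simp
    have id2: "int \<delta>2 = (int b2 - int a2) mod int n" unfolding \<delta>2_def using modn_int[OF fin(2)] by simp
    have qeq: "q = \<delta>2 - p"
    proof -
      have "int q = int \<delta>2 - int p"
      proof (rule int_mod_uniq[of _ "int n" _ n])
        show "0 \<le> int q" "int q < int n" "0 \<le> int \<delta>2 - int p" "int \<delta>2 - int p < int n" "int n = int n"
          using lt pd by auto
        have A: "int n dvd ((int b2 - int a1) - (int b2 - int a1) mod int n)" by (rule dvd_minus_mod)
        have B: "int n dvd ((int b2 - int a2) - (int b2 - int a2) mod int n)" by (rule dvd_minus_mod)
        have C: "int n dvd ((int a1 - int a2) - (int a1 - int a2) mod int n)" by (rule dvd_minus_mod)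
        have D: "int n dvd (((int b2 - int a2) - (int b2 - int a2) mod int n) - ((int b2 - int a1) - (int b2 - int a1) mod int n) - ((int a1 - int a2) - (int a1 - int a2) mod int n))"
          using A B C by (meson dvd_diff)
        have E: "int q - (int \<delta>2 - int p) = ((int b2 - int a2) - (int b2 - int a2) mod int n) - ((int b2 - int a1) - (int b2 - int a1) mod int n) - ((int a1 - int a2) - (int a1 - int a2) mod int n)"
          unfolding iq id2 ip by (simp add: algebra_simps)
        show "int n dvd (int q - (int \<delta>2 - int p))" unfolding E by (rule D)
      qed
      then show ?thesis using pd by simp
    qed
    define r where "r = \<delta>2 + 1 - p"
    have r1: "1 \<le> r" unfolding r_def using pd by simp
    have rL: "r \<le> \<delta>1 + 1" unfolding r_def using pd qd qeq by simp
    have rM: "r \<le> \<delta>2 + 1" unfolding r_def by simp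
    have dn: "2 * n \<le> d * n" using d2 by (simp add: mult_le_mono1)
    have LM: "(\<delta>1 + 1) + (\<delta>2 + 1) \<le> d * n + r" using lt dn r1 by linarith
    have v: "vtx n a2 (\<delta>2 + 1 - r) = a1"
    proof (rule vtx_intI)
      show "1 \<le> a1" "a1 \<le> n" "1 \<le> a2" using fin by auto
      have e: "\<delta>2 + 1 - r = p" unfolding r_def using pd by simp
      have C: "int n dvd ((int a1 - int a2) - (int a1 - int a2) mod int n)" by (rule dvd_minus_mod)
      have E: "int a2 + int (\<delta>2 + 1 - r) - int a1 = - ((int a1 - int a2) - (int a1 - int a2) mod int n)"
        unfolding e ip by simp
      show "int n dvd (int a2 + int (\<delta>2 + 1 - r) - int a1)" unfolding E using C by (simp only: dvd_minus_iff)
    qed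
    have "\<not> stable_hom_zero K n d (a1, \<delta>1 + 1) (a2, \<delta>2 + 1)"
      by (rule nonzero_hom[OF r1 rL rM LM v])
    moreover have "mod_of n (a1, b1, 0) = (a1, \<delta>1 + 1)" "mod_of n (a2, b2, 0) = (a2, \<delta>2 + 1)"
      unfolding mod_of_eq \<delta>1_def \<delta>2_def by simp_all
    ultimately have "(a1, b1, 0) = (a2, b2, (0::nat))"
      using sms_eq[OF S m1[folded a1_def b1_def] m2[folded a2_def b2_def]] by simp
    then have "a1 = a2" by simp
    then show False using dist[OF j] unfolding a1_def a2_def by simp
  qed
  show ?thesis
  proof (intro allI impI)
    fix j1 j2
    assume h: "j1 < orbit_size (sms_perm S) i \<and> j2 < orbit_size (sms_perm S) i \<and>
           ((sms_perm S ^^ j1) i, (sms_perm S ^^ Suc j1) i, 0) \<in> S \<and>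
           ((sms_perm S ^^ j2) i, (sms_perm S ^^ Suc j2) i, 0) \<in> S"
    show "j1 = j2"
    proof (rule linorder_cases[of j1 j2])
      assume "j1 < j2" then show ?thesis using key[of j1 j2] h unfolding \<sigma>_def s_def by (elim conjE) simp
    next
      assume "j2 < j1" then show ?thesis using key[of j2 j1] h unfolding \<sigma>_def s_def by (elim conjE) simp
    qed
  qed
qed

end
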